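(* Let $q$ be a power of an odd prime, and let $\theta\in\mathbb{F}_{q^2}\setminus\mathbb{F}_q$ satisfy $\theta^2=\mu_1\theta+\mu_0$ with $\mu_0,\mu_1\in\mathbb{F}_q$. Let \[ X=\{(s_0+s_1\theta,\ t_0+(4s_1s_0+2s_1^2\mu_1)\theta):s_0,s_1,t_0\in\mathbb{F}_q\}\subset\mathbb{F}_{q^2}^2. \] Then the induced subgraph $G_{q^2}[X]$ has maximum degree at most $2q-1$.
   Context: For a power $Q$ of an odd prime, the graph $G_Q$ has vertex set $\mathbb{F}_Q\times\mathbb{F}_Q$, and distinct vertices $(x_1,x_2)$, $(y_1,y_2)$ are adjacent if and only if $(x_1+y_1)^2=x_2+y_2$; $G_Q$ has no loops. *)

theory Defs
  imports Main "HOL-Computational_Algebra.Primes"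
begin

definition G_adj :: "('a::field \<times> 'a) \<Rightarrow> ('a \<times> 'a) \<Rightarrow> bool" where
  "G_adj x y \<longleftrightarrow> x \<noteq> y \<and> (fst x + fst y)^2 = snd x + snd y"

definition induced_degree :: "('a::field \<times> 'a) set \<Rightarrow> ('a \<times> 'a) \<Rightarrow> nat" where
  "induced_degree X v = card {w \<in> X. G_adj v w}"

definition is_subfield :: "'a::field set \<Rightarrow> bool" where
  "is_subfield K \<longleftrightarrow> 0 \<in> K \<and> 1 \<in> K \<and> (\<forall>x\<in>K. \<forall>y\<in>K. x + y \<in> K \<and> x * y \<in> K)
     \<and> (\<forall>x\<in>K. - x \<in> K) \<and> (\<forall>x\<in>K. x \<noteq> 0 \<longrightarrow> inverse x \<in> K)"

definition X_set :: "'a::field set \<Rightarrow> 'a \<Rightarrow> 'a \<Rightarrow> ('a \<times> 'a) set" where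
  "X_set K \<theta> \<mu>1 = {(s0 + s1 * \<theta>, t0 + (4 * s1 * s0 + 2 * s1^2 * \<mu>1) * \<theta>) | s0 s1 t0.
       s0 \<in> K \<and> s1 \<in> K \<and> t0 \<in> K}"

end

theory Submission
  imports Defs
begin

lemma invol_even:
  fixes f :: "'b \<Rightarrow> 'b"
  shows "finite S \<Longrightarrow> (\<forall>x\<in>S. f x \<in> S \<and> f x \<noteq> x \<and> f (f x) = x) \<Longrightarrow> even (card S)"
proof (induction "card S" arbitrary: S rule: less_induct)
  case less
  show ?case
  proof (cases "S = {}")
    case True then show ?thesis by simp
  next
    case False
    then obtain x where x: "x \<in> S" by blast
    let ?T = "S - {x, f x}"
    have fx: "f x \<in> S" "f x \<noteq> x" using less.prems x by auto
    have cT: "card S = card ?T + 2"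
    proof -
      have "card {x, f x} = 2" using fx by simp
      moreover have "{x, f x} \<subseteq> S" using x fx by auto
      ultimately show ?thesis using less.prems(1) card_Diff_subset[of "{x, f x}" S] card_mono[of S "{x, f x}"]
        by auto
    qed
    have "even (card ?T)"
    proof (rule less.hyps)
      show "card ?T < card S" using cT by simp
      show "finite ?T" using less.prems by simp
      show "\<forall>y\<in>?T. f y \<in> ?T \<and> f y \<noteq> y \<and> f (f y) = y"
      proof
        fix y assume y: "y \<in> ?T"
        then have yS: "y \<in> S" and yx: "y \<noteq> x" and yfx: "y \<noteq> f x" by auto
        have p: "f y \<in> S" "f y \<noteq> y" "f (f y) = y" using less.prems(2) yS by auto
        have px: "f (f x) = x" using less.prems(2) x by auto
        have "f y \<noteq> x" using p(3) yfx by auto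
        moreover have "f y \<noteq> f x" using p(3) px yx by metis
        ultimately show "f y \<in> ?T \<and> f y \<noteq> y \<and> f (f y) = y" using p by auto
      qed
    qed
    then show ?thesis using cT by simp
  qed
qed

lemma two_ne_zero_field:
  assumes "odd (card (UNIV :: 'a::{field,finite} set))"
  shows "(2::'a) \<noteq> 0"
proof
  assume h: "(2::'a) = 0"
  have "even (card (UNIV :: 'a set))"
  proof (rule invol_even[where f = "\<lambda>x. x + 1"])
    show "finite (UNIV :: 'a set)" by simp
    show "\<forall>x\<in>(UNIV::'a set). x + 1 \<in> UNIV \<and> x + 1 \<noteq> x \<and> x + 1 + 1 = x"
    proof
      fix x :: 'a
      have "x + 1 + 1 = x + 2" by (simp add: add.assoc one_add_one)
      then show "x + 1 \<in> UNIV \<and> x + 1 \<noteq> x \<and> x + 1 + 1 = x" using h by simp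
    qed
  qed
  then show False using assms by simp
qed

lemma subfield_facts:
  assumes "is_subfield K"
  shows "0 \<in> K" "1 \<in> K" "x \<in> K \<Longrightarrow> y \<in> K \<Longrightarrow> x + y \<in> K"
    "x \<in> K \<Longrightarrow> y \<in> K \<Longrightarrow> x * y \<in> K" "x \<in> K \<Longrightarrow> - x \<in> K"
    "x \<in> K \<Longrightarrow> y \<in> K \<Longrightarrow> x - y \<in> K" "x \<in> K \<Longrightarrow> inverse x \<in> K"
    "x \<in> K \<Longrightarrow> y \<in> K \<Longrightarrow> x / y \<in> K" "x \<in> K \<Longrightarrow> x ^ n \<in> K"
proof -
  show "0 \<in> K" "1 \<in> K" using assms unfolding is_subfield_def by auto
  show "x \<in> K \<Longrightarrow> y \<in> K \<Longrightarrow> x + y \<in> K" "x \<in> K \<Longrightarrow> y \<in> K \<Longrightarrow> x * y \<in> K"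
    "x \<in> K \<Longrightarrow> - x \<in> K" using assms unfolding is_subfield_def by auto
  show "x \<in> K \<Longrightarrow> y \<in> K \<Longrightarrow> x - y \<in> K" using assms unfolding is_subfield_def
    by (metis diff_conv_add_uminus)
  show iK: "x \<in> K \<Longrightarrow> inverse x \<in> K" for x using assms unfolding is_subfield_def
    by (metis inverse_zero)
  show "x \<in> K \<Longrightarrow> y \<in> K \<Longrightarrow> x / y \<in> K" using assms iK[of y] unfolding is_subfield_def
    by (metis divide_inverse)
  show "x \<in> K \<Longrightarrow> x ^ n \<in> K" using assms unfolding is_subfield_def
    by (induct n) auto
qed

lemma subfield_two: "is_subfield K \<Longrightarrow> (2::'a::field) \<in> K"
  unfolding is_subfield_def by (metis one_add_one)

lemma subfield_four: "is_subfield K \<Longrightarrow> (4::'a::field) \<in> K"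
proof -
  assume a: "is_subfield K"
  have "(4::'a) = 2 + 2" by simp
  then show ?thesis using subfield_two[OF a] subfield_facts(3)[OF a] by metis
qed

lemma lin_indep:
  assumes K: "is_subfield K" and th: "\<theta> \<notin> K"
    and "x0 \<in> K" "x1 \<in> K" "y0 \<in> K" "y1 \<in> K"
    and e: "x0 + x1 * \<theta> = y0 + y1 * (\<theta>::'a::field)"
  shows "x0 = y0 \<and> x1 = y1"
proof (cases "x1 = y1")
  case True then show ?thesis using e by simp
next
  case False
  have "(x1 - y1) * \<theta> = y0 - x0" using e by (simp add: algebra_simps)
  then have "\<theta> = (y0 - x0) / (x1 - y1)" using False by (simp add: field_simps)
  moreover have "(y0 - x0) / (x1 - y1) \<in> K"
    using assms by (simp add: subfield_facts)
  ultimately show ?thesis using th by simp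
qed

theorem mainTheorem11:
  fixes K :: "'a::{field,finite} set" and q p k :: nat and \<theta> \<mu>0 \<mu>1 :: 'a
  assumes "prime p" and "odd p" and "k \<ge> 1" and "q = p ^ k"
    and "card (UNIV :: 'a set) = q ^ 2"
    and "is_subfield K" and "card K = q"
    and "\<theta> \<notin> K" and "\<mu>0 \<in> K" and "\<mu>1 \<in> K"
    and "\<theta>^2 = \<mu>1 * \<theta> + \<mu>0"
  shows "\<forall>v \<in> X_set K \<theta> \<mu>1. induced_degree (X_set K \<theta> \<mu>1) v \<le> 2 * q - 1"
proof
  note KK = assms(6)
  note sf = subfield_facts[OF KK] subfield_two[OF KK] subfield_four[OF KK]
  have oddq: "odd (card (UNIV :: 'a set))" using assms(2,4,5) by simp
  have two: "(2::'a) \<noteq> 0" using two_ne_zero_field[OF oddq] .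
  fix v assume "v \<in> X_set K \<theta> \<mu>1"
  then obtain a0 a1 b0 where ab: "a0 \<in> K" "a1 \<in> K" "b0 \<in> K"
    and v: "v = (a0 + a1 * \<theta>, b0 + (4 * a1 * a0 + 2 * a1^2 * \<mu>1) * \<theta>)"
    unfolding X_set_def by blast
  define g where "g = (\<lambda>(s0::'a, s1::'a). (s0 + s1 * \<theta>,
      ((a0 + s0)^2 + \<mu>0 * (a1 + s1)^2 - b0) + (4 * s1 * s0 + 2 * s1^2 * \<mu>1) * \<theta>))"
  define L1 where "L1 = (\<lambda>s0. (s0, a1)) ` K"
  define L2 where "L2 = (\<lambda>s1. (a0 + \<mu>1 * (a1 - s1) / 2, s1)) ` K"
  have sub: "{w \<in> X_set K \<theta> \<mu>1. G_adj v w} \<subseteq> g ` (L1 \<union> L2)"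
  proof
    fix w assume "w \<in> {w \<in> X_set K \<theta> \<mu>1. G_adj v w}"
    then have wX: "w \<in> X_set K \<theta> \<mu>1" and adj: "G_adj v w" by auto
    then obtain s0 s1 t0 where s: "s0 \<in> K" "s1 \<in> K" "t0 \<in> K"
      and w: "w = (s0 + s1 * \<theta>, t0 + (4 * s1 * s0 + 2 * s1^2 * \<mu>1) * \<theta>)"
      unfolding X_set_def by blast
    define P where "P = (a0 + s0)^2 + \<mu>0 * (a1 + s1)^2"
    define Q where "Q = 2 * (a0 + s0) * (a1 + s1) + \<mu>1 * (a1 + s1)^2"
    define R where "R = 4 * a1 * a0 + 2 * a1^2 * \<mu>1 + (4 * s1 * s0 + 2 * s1^2 * \<mu>1)"
    have "(a0 + s0 + (a1 + s1) * \<theta>)^2 = (a0+s0)^2 + 2*(a0+s0)*(a1+s1)*\<theta> + (a1+s1)^2 * \<theta>^2"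
      by (simp add: power2_eq_square algebra_simps)
    also have "\<dots> = P + Q * \<theta>" unfolding P_def Q_def assms(11)
      by (simp add: algebra_simps)
    finally have sq: "(a0 + s0 + (a1 + s1) * \<theta>)^2 = P + Q * \<theta>" .
    from adj have "(fst v + fst w)^2 = snd v + snd w" unfolding G_adj_def by simp
    then have "(a0 + s0 + (a1 + s1) * \<theta>)^2 = (b0 + t0) + R * \<theta>"
      unfolding v w R_def by (simp add: algebra_simps)
    with sq have e: "P + Q * \<theta> = (b0 + t0) + R * \<theta>" by simp
    have PK: "P \<in> K" unfolding P_def using ab s assms(9) by (simp add: sf)
    have QK: "Q \<in> K" unfolding Q_def using ab s assms(10) by (simp add: sf)
    have RK: "R \<in> K" unfolding R_def using ab s assms(10) by (simp add: sf)
    have bt: "b0 + t0 \<in> K" using ab s by (simp add: sf)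
    from lin_indep[OF KK assms(8) PK QK bt RK e] have PE: "P = b0 + t0" and QE: "Q = R" by auto
    have wg: "w = g (s0, s1)" unfolding w g_def using PE unfolding P_def
      by (simp add: algebra_simps)
    have "Q - R = - ((a1 - s1) * (2 * (a0 - s0) + \<mu>1 * (a1 - s1)))"
      unfolding Q_def R_def by (simp add: power2_eq_square algebra_simps)
    with QE have "(a1 - s1) * (2 * (a0 - s0) + \<mu>1 * (a1 - s1)) = 0" by simp
    then have "s1 = a1 \<or> 2 * (a0 - s0) + \<mu>1 * (a1 - s1) = 0" by (metis mult_eq_0_iff right_minus_eq)
    then have "(s0, s1) \<in> L1 \<union> L2"
    proof
      assume "s1 = a1" then show ?thesis unfolding L1_def using s by auto
    next
      assume h: "2 * (a0 - s0) + \<mu>1 * (a1 - s1) = 0"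
      have h2: "2 * s0 = 2 * a0 + \<mu>1 * (a1 - s1)" using h by algebra
      have "s0 = (2 * s0) / 2" using two by simp
      also have "\<dots> = a0 + \<mu>1 * (a1 - s1) / 2" unfolding h2 using two
        by (simp add: add_divide_distrib)
      finally have "s0 = a0 + \<mu>1 * (a1 - s1) / 2" .
      then show ?thesis unfolding L2_def using s by auto
    qed
    then show "w \<in> g ` (L1 \<union> L2)" using wg by blast
  qed
  have fin: "finite K" by simp
  have c1: "card L1 = q" unfolding L1_def using assms(7)
    by (subst card_image) (auto simp: inj_on_def)
  have c2: "card L2 \<le> q" unfolding L2_def using assms(7) card_image_le[OF fin] by metis
  have "(a0, a1) \<in> L1 \<inter> L2" unfolding L1_def L2_def using ab by force
  then have c3: "card (L1 \<inter> L2) \<ge> 1"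
    by (metis One_nat_def Suc_leI card_gt_0_iff empty_iff finite)
  have "card (L1 \<union> L2) + card (L1 \<inter> L2) = card L1 + card L2"
    using card_Un_Int[of L1 L2] by simp
  then have cU: "card (L1 \<union> L2) \<le> 2 * q - 1" using c1 c2 c3 by linarith
  have "induced_degree (X_set K \<theta> \<mu>1) v \<le> card (g ` (L1 \<union> L2))"
    unfolding induced_degree_def by (rule card_mono[OF _ sub]) simp
  also have "\<dots> \<le> card (L1 \<union> L2)" by (rule card_image_le) simp
  finally show "induced_degree (X_set K \<theta> \<mu>1) v \<le> 2 * q - 1" using cU by linarith
qed

end
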